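(* Let $n\ge 4$ with $4\nmid n$, and let $D_n$ be the tree on vertex set $\{1,\ldots,n\}$ with edges $\{1,3\}$, $\{2,3\}$ and $\{i,i+1\}$ for $3\le i\le n-1$, with adjacency matrix $A$. Let $e$ be the all-ones vector of length $n$ and $W(D_n)=[e,Ae,\ldots,A^{n-1}e]$. Then the Smith normal form of $W(D_n)$ is $$\operatorname{diag}[\underbrace{1,\ldots,1}_{\lceil n/2\rceil},\underbrace{2,\ldots,2}_{\lfloor n/2\rfloor-1},0].$$
   Context: For an integral $n\times n$ matrix $M$, its Smith normal form is the unique diagonal matrix $\operatorname{diag}[d_1,\ldots,d_n]$ with nonnegative integers $d_i$, $d_i\mid d_{i+1}$, such that $UMV=\operatorname{diag}[d_1,\ldots,d_n]$ for some unimodular integer matrices $U,V$. *)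

theory Defs
  imports "Jordan_Normal_Form.Determinant"
begin

definition unimodular_int :: "nat \<Rightarrow> int mat \<Rightarrow> bool" where
  "unimodular_int n U \<longleftrightarrow> U \<in> carrier_mat n n \<and> det U dvd 1"

definition is_smith_normal_form :: "nat \<Rightarrow> int mat \<Rightarrow> int mat \<Rightarrow> bool" where
  "is_smith_normal_form n M D \<longleftrightarrow>
     D \<in> carrier_mat n n \<and>
     (\<forall>i<n. \<forall>j<n. i \<noteq> j \<longrightarrow> D $$ (i,j) = 0) \<and>
     (\<forall>i<n. D $$ (i,i) \<ge> 0) \<and>
     (\<forall>i. i + 1 < n \<longrightarrow> D $$ (i,i) dvd D $$ (i+1,i+1)) \<and>
     (\<exists>U V. unimodular_int n U \<and> unimodular_int n V \<and> U * M * V = D)"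

definition Dn_edge :: "nat \<Rightarrow> nat \<Rightarrow> nat \<Rightarrow> bool" where
  "Dn_edge n u v \<longleftrightarrow>
     {u, v} = {1, 3} \<or> {u, v} = {2, 3} \<or> (\<exists>i. 3 \<le> i \<and> i \<le> n - 1 \<and> {u, v} = {i, i + 1})"

(* Adjacency matrix of D_n; row/column index k (0-based) corresponds to vertex k+1. *)
definition Dn_adj :: "nat \<Rightarrow> int mat" where
  "Dn_adj n = mat n n (\<lambda>(i, j). if Dn_edge n (i + 1) (j + 1) then 1 else 0)"

definition walk_matrix :: "nat \<Rightarrow> int mat \<Rightarrow> int mat" where
  "walk_matrix n A = mat n n (\<lambda>(i, j). ((A ^\<^sub>m j) *\<^sub>v vec n (\<lambda>_. 1)) $ i)"

end

theory Submission
  imports Defs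
begin


lemma edge_iff:
  assumes "u < n" "v < n"
  shows "Dn_edge n (v+1) (u+1) \<longleftrightarrow>
    (v = 0 \<and> u = 2) \<or> (v = 1 \<and> u = 2) \<or> (v = 2 \<and> u \<le> 1) \<or> (v \<ge> 2 \<and> u = v+1) \<or> (u \<ge> 2 \<and> v = u+1)"
proof -
  have 1: "({v+1,u+1} = {1,3}) \<longleftrightarrow> (v=0 \<and> u=2) \<or> (v=2 \<and> u=0)" by (auto simp: doubleton_eq_iff)
  have 2: "({v+1,u+1} = {2,3}) \<longleftrightarrow> (v=1 \<and> u=2) \<or> (v=2 \<and> u=1)" by (auto simp: doubleton_eq_iff)
  have 3: "(\<exists>i. 3 \<le> i \<and> i \<le> n - 1 \<and> {v+1,u+1} = {i,i+1}) \<longleftrightarrow> (v \<ge> 2 \<and> u = v+1) \<or> (u \<ge> 2 \<and> v = u+1)"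
  proof
    assume "\<exists>i. 3 \<le> i \<and> i \<le> n - 1 \<and> {v+1,u+1} = {i,i+1}"
    then obtain i where "3 \<le> i" "{v+1,u+1} = {i,i+1}" by blast
    then show "(v \<ge> 2 \<and> u = v+1) \<or> (u \<ge> 2 \<and> v = u+1)" by (auto simp: doubleton_eq_iff)
  next
    assume "(v \<ge> 2 \<and> u = v+1) \<or> (u \<ge> 2 \<and> v = u+1)"
    then show "\<exists>i. 3 \<le> i \<and> i \<le> n - 1 \<and> {v+1,u+1} = {i,i+1}"
    proof
      assume h: "v \<ge> 2 \<and> u = v+1"
      show ?thesis by (rule exI[of _ "v+1"]) (use h assms in auto)
    next
      assume h: "u \<ge> 2 \<and> v = u+1"
      show ?thesis by (rule exI[of _ "u+1"]) (use h assms in auto)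
    qed
  qed
  show ?thesis unfolding Dn_edge_def 1 2 3 by auto
qed

definition nbr :: "nat \<Rightarrow> (nat \<Rightarrow> int) \<Rightarrow> nat \<Rightarrow> int" where
  "nbr n x v = (\<Sum>u<n. (if Dn_edge n (v+1) (u+1) then 1 else 0) * x u)"

lemma nbr_explicit:
  assumes n: "n \<ge> 4" and v: "v < n"
  shows "nbr n x v = (if v \<le> 1 then x 2 else if v = 2 then x 0 + x 1 + x 3
      else if v = n - 1 then x (n - 2) else x (v - 1) + x (v + 1))"
proof -
  have "nbr n x v = (\<Sum>u<n. if u \<in> {u. Dn_edge n (v+1) (u+1)} then x u else 0)"
    unfolding nbr_def by (intro sum.cong) auto
  also have "\<dots> = sum x ({..<n} \<inter> {u. Dn_edge n (v+1) (u+1)})"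
    by (rule sum.inter_restrict[symmetric]) auto
  also have "{..<n} \<inter> {u. Dn_edge n (v+1) (u+1)} = {u. u < n \<and> ((v = 0 \<and> u = 2) \<or> (v = 1 \<and> u = 2) \<or> (v = 2 \<and> u \<le> 1) \<or> (v \<ge> 2 \<and> u = v+1) \<or> (u \<ge> 2 \<and> v = u+1))}"
    using v edge_iff by auto
  also have "\<dots> =
     (if v \<le> 1 then {2} else if v = 2 then {0,1,3} else if v = n - 1 then {n-2} else {v-1, v+1})"
    using n v by auto
  finally show ?thesis using n v by auto
qed

lemma nbr_lin: "nbr n (\<lambda>u. \<Sum>i\<in>I. c i * g i u) v = (\<Sum>i\<in>I. c i * nbr n (g i) v)"
  unfolding nbr_def by (simp add: sum_distrib_left sum_distrib_right algebra_simps sum.swap[of _ I])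



definition zz :: "int \<Rightarrow> int \<Rightarrow> int" where
  "zz M t = (if t = 0 then 2 else if \<bar>t\<bar> < M then 1 else if \<bar>t\<bar> = M then 0 else -1)"

lemma zz_even: "zz M (a - b) = zz M (b - a)"
  unfolding zz_def by (simp add: abs_minus_commute)

lemma zz_neg: "zz M (- t) = zz M t"
  unfolding zz_def by simp

lemma zz_refl: assumes "\<bar>t\<bar> < M" shows "zz M (M + t) = - zz M (M - t)"
  using assms unfolding zz_def by auto

definition colF :: "nat \<Rightarrow> int \<Rightarrow> nat \<Rightarrow> int" where
  "colF n j v = (if v \<le> 1 then zz (int n - 1) j
     else zz (int n - 1) (int v - 1 + j) + zz (int n - 1) (int v - 1 - j))"

lemma colF_rec:
  assumes n: "n \<ge> 5" and v: "v < n" and c: "\<bar>c\<bar> < int n - 1"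
  shows "nbr n (colF n c) v = colF n (c+1) v + colF n (c-1) v"
proof -
  define M where "M = int n - 1"
  have n4: "n \<ge> 4" using n by simp
  note h = nbr_explicit[OF n4 v]
  consider "v \<le> 1" | "v = 2" | "v = n - 1" | "3 \<le> v" "v \<le> n - 2" using n v by linarith
  then show ?thesis
  proof cases
    case 1
    have "zz M (1 - c) = zz M (c - 1)" by (rule zz_even)
    then show ?thesis using 1 unfolding h colF_def M_def by (simp add: algebra_simps)
  next
    case 2
    have "zz M (1 - c) = zz M (c - 1)" by (rule zz_even)
    moreover have "zz M (- 1 - c) = zz M (c + 1)" using zz_even[of M "-1" c] by (simp add: algebra_simps)
    ultimately show ?thesis using 2 n unfolding h colF_def M_def by (simp add: algebra_simps zz_neg)
  next
    case 3
    have r: "zz M (M + c) = - zz M (M - c)" using c unfolding M_def by (intro zz_refl) auto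
    have l: "nbr n (colF n c) v = colF n c (n-2)" unfolding h using 3 n by auto
    have nn: "\<not> n - 2 \<le> 1" using n by linarith
    have vn: "\<not> v \<le> 1" using n 3 by linarith
    have a1: "colF n c (n-2) = zz M (M - 2 + c) + zz M (M - 2 - c)"
      using n nn unfolding colF_def M_def by (simp add: of_nat_diff algebra_simps)
    have a2: "colF n (c+1) v = zz M (M + c) + zz M (M - 2 - c)"
      using n 3 vn unfolding colF_def M_def by (simp add: of_nat_diff algebra_simps)
    have a3: "colF n (c-1) v = zz M (M + c - 2) + zz M (M - c)"
      using n 3 vn unfolding colF_def M_def by (simp add: of_nat_diff algebra_simps)
    show ?thesis unfolding l a1 a2 a3 r by (simp add: algebra_simps)
  next
    case 4
    have e1: "int (v - 1) = int v - 1" using 4 by auto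
    have f: "\<not> v - 1 \<le> 1" "v \<noteq> n - 1" "\<not> v \<le> 1" "v \<noteq> 2" "\<not> v + 1 \<le> 1" using 4 n by auto
    show ?thesis using 4 n f unfolding h colF_def e1 M_def[symmetric] by (simp add: algebra_simps)
  qed
qed

definition Fv :: "nat \<Rightarrow> nat \<Rightarrow> nat \<Rightarrow> int" where
  "Fv n j v = (if v = 0 then 1 else 0) + (if v = 1 then 1 else 0) + (if v = j+1 then 1 else 0)
     + (if 2 \<le> v \<and> v + j + 1 \<le> n then 1 else 0) + (if 2 \<le> v \<and> v + j \<le> n then 1 else 0)"


lemma nbr_cong: "(\<And>u. u < n \<Longrightarrow> x u = y u) \<Longrightarrow> nbr n x v = nbr n y v"
  unfolding nbr_def by (intro sum.cong) auto

lemma nbr_smult: "nbr n (\<lambda>u. k * x u) v = k * nbr n x v"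
  unfolding nbr_def by (simp add: sum_distrib_left algebra_simps)

lemma pow_mat_Suc': "A \<in> carrier_mat n n \<Longrightarrow> A ^\<^sub>m Suc k = A * A ^\<^sub>m k"
proof (induct k)
  case 0 then show ?case by simp
next
  case (Suc k)
  have "A ^\<^sub>m Suc (Suc k) = (A * A ^\<^sub>m k) * A" using Suc by simp
  also have "\<dots> = A * (A ^\<^sub>m k * A)" using Suc by (intro assoc_mult_mat) auto
  finally show ?case by simp
qed

lemma Dn_adj_carrier: "Dn_adj n \<in> carrier_mat n n" by (simp add: Dn_adj_def)

definition wk :: "nat \<Rightarrow> nat \<Rightarrow> nat \<Rightarrow> int" where
  "wk n i v = (Dn_adj n ^\<^sub>m i *\<^sub>v vec n (\<lambda>_. 1)) $ v"

lemma wk_0: "v < n \<Longrightarrow> wk n 0 v = 1"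
  unfolding wk_def by (simp add: Dn_adj_def)

lemma wk_Suc: assumes v: "v < n" shows "wk n (Suc i) v = nbr n (wk n i) v"
proof -
  let ?A = "Dn_adj n" let ?e = "vec n (\<lambda>_. 1) :: int vec"
  have "?A ^\<^sub>m Suc i *\<^sub>v ?e = ?A *\<^sub>v (?A ^\<^sub>m i *\<^sub>v ?e)"
    unfolding pow_mat_Suc'[OF Dn_adj_carrier]
    by (rule assoc_mult_mat_vec[of _ n n _ n]) (auto simp: Dn_adj_carrier)
  then have "wk n (Suc i) v = (?A *\<^sub>v (?A ^\<^sub>m i *\<^sub>v ?e)) $ v" unfolding wk_def by simp
  also have "\<dots> = (\<Sum>u\<in>{0..<n}. ?A $$ (v,u) * wk n i u)"
    using v Dn_adj_carrier[of n] unfolding wk_def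
    by (simp add: scalar_prod_def)
  also have "\<dots> = nbr n (wk n i) v"
    unfolding nbr_def using v by (intro sum.cong) (auto simp: Dn_adj_def)
  finally show ?thesis .
qed

fun cheb :: "nat \<Rightarrow> nat \<Rightarrow> int" where
  "cheb 0 i = (if i = 0 then 1 else 0)"
| "cheb (Suc 0) i = (if i = 1 then 1 else 0)"
| "cheb (Suc (Suc j)) i = (if i = 0 then 0 else cheb (Suc j) (i - 1)) - (if j = 0 then 2 else 1) * cheb j i"

lemma cheb_zero: "j < i \<Longrightarrow> cheb j i = 0"
  by (induct j i rule: cheb.induct) auto

lemma cheb_diag: "cheb j j = 1"
proof (induct j rule: less_induct)
  case (less j)
  show ?case
  proof (cases j)
    case (Suc k)
    show ?thesis
    proof (cases k)
      case (Suc k')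
      then show ?thesis using less \<open>j = Suc k\<close> by (simp add: cheb_zero)
    qed (use Suc in simp)
  qed simp
qed

definition K :: "nat \<Rightarrow> nat \<Rightarrow> nat \<Rightarrow> int" where
  "K n j v = (\<Sum>i<n. cheb j i * wk n i v)"

lemma K_0: assumes "v < n" shows "K n 0 v = 1"
proof -
  have "K n 0 v = (\<Sum>i<n. if i = 0 then wk n i v else 0)" unfolding K_def by (intro sum.cong) auto
  also have "\<dots> = wk n 0 v" using assms by simp
  finally show ?thesis using wk_0 assms by simp
qed

lemma K_1: assumes "v < n" "n \<ge> 2" shows "K n 1 v = nbr n (\<lambda>_. 1) v"
proof -
  have "K n 1 v = (\<Sum>i<n. if i = 1 then wk n i v else 0)" unfolding K_def by (intro sum.cong) auto
  also have "\<dots> = wk n 1 v" using assms by simp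
  also have "\<dots> = nbr n (wk n 0) v" using wk_Suc[OF assms(1), of 0] by simp
  also have "\<dots> = nbr n (\<lambda>_. 1) v" by (rule nbr_cong) (simp add: wk_0)
  finally show ?thesis .
qed

lemma shift_sum:
  fixes g h :: "nat \<Rightarrow> int"
  assumes "n \<ge> 1" "g (n - 1) = 0"
  shows "(\<Sum>i<n. (if i = 0 then 0 else g (i - 1)) * h i) = (\<Sum>i<n. g i * h (Suc i))"
proof -
  obtain m where m: "n = Suc m" using assms by (cases n) auto
  have "(\<Sum>i<n. (if i = 0 then 0 else g (i - 1)) * h i) = (\<Sum>i<m. g i * h (Suc i))"
    unfolding m sum.lessThan_Suc_shift by simp
  also have "\<dots> = (\<Sum>i<n. g i * h (Suc i))" using assms unfolding m by simp
  finally show ?thesis .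
qed

lemma K_rec:
  assumes v: "v < n" and j: "Suc (Suc j) \<le> n - 1"
  shows "K n (Suc (Suc j)) v = nbr n (K n (Suc j)) v - (if j = 0 then 2 else 1) * K n j v"
proof -
  have "K n (Suc (Suc j)) v = (\<Sum>i<n. (if i = 0 then 0 else cheb (Suc j) (i - 1)) * wk n i v)
      - (if j = 0 then 2 else 1) * K n j v"
    unfolding K_def by (simp add: algebra_simps sum_subtractf sum_distrib_left)
  also have "(\<Sum>i<n. (if i = 0 then 0 else cheb (Suc j) (i - 1)) * wk n i v) = (\<Sum>i<n. cheb (Suc j) i * wk n (Suc i) v)"
    using j by (intro shift_sum) (auto intro: cheb_zero)
  also have "\<dots> = (\<Sum>i<n. cheb (Suc j) i * nbr n (wk n i) v)" using wk_Suc[OF v] by simp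
  also have "\<dots> = nbr n (K n (Suc j)) v" unfolding K_def nbr_lin[symmetric] ..
  finally show ?thesis .
qed


lemma colF_0: assumes "v < n" "n \<ge> 3" shows "colF n 0 v = 2"
  using assms unfolding colF_def zz_def by auto

lemma colF_neg: "colF n (- j) v = colF n j v"
proof -
  have "zz (int n - 1) (- j) = zz (int n - 1) j" by (rule zz_neg)
  moreover have "zz (int n - 1) (int v - 1 - j) = zz (int n - 1) (-(int v - 1 - j))" by (rule zz_neg[symmetric])
  ultimately show ?thesis unfolding colF_def by (simp add: algebra_simps)
qed

lemma colF_1: assumes "v < n" "n \<ge> 5" shows "colF n 1 v = nbr n (\<lambda>_. 1) v"
proof -
  have "nbr n (colF n 0) v = colF n 1 v + colF n (-1) v"
    using colF_rec[OF assms(2) assms(1), of 0] assms by simp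
  also have "\<dots> = 2 * colF n 1 v" using colF_neg[of n 1 v] by simp
  finally have "2 * colF n 1 v = nbr n (colF n 0) v" by simp
  also have "\<dots> = nbr n (\<lambda>u. 2 * 1) v" using assms by (intro nbr_cong) (simp add: colF_0)
  also have "\<dots> = 2 * nbr n (\<lambda>_. 1) v" by (rule nbr_smult)
  finally show ?thesis by simp
qed

lemma K_eq: assumes n: "n \<ge> 5"
  shows "1 \<le> j \<Longrightarrow> j \<le> n - 1 \<Longrightarrow> v < n \<Longrightarrow> K n j v = colF n (int j) v"
proof (induct j arbitrary: v rule: less_induct)
  case (less j)
  show ?case
  proof (cases "j = 1")
    case True
    then show ?thesis using less K_1 colF_1 n by simp
  next
    case False
    then obtain i where i: "j = Suc (Suc i)" using less(2) by (cases j; cases "j - 1") auto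
    have r: "nbr n (colF n (int (Suc i))) v = colF n (int (Suc i) + 1) v + colF n (int (Suc i) - 1) v"
      by (rule colF_rec) (use less i n in auto)
    have KS: "nbr n (K n (Suc i)) v = nbr n (colF n (int (Suc i))) v"
      by (rule nbr_cong) (use less i in auto)
    show ?thesis
    proof (cases "i = 0")
      case True
      have "K n j v = nbr n (K n 1) v - 2 * K n 0 v" using K_rec[of v n 0] less i True by simp
      also have "\<dots> = colF n 2 v"
        using r KS True K_0[OF less(4)] colF_0[OF less(4)] n by simp
      finally show ?thesis using i True by simp
    next
      case False
      have "K n j v = nbr n (K n (Suc i)) v - K n i v" using K_rec[of v n i] less i False by simp
      also have "K n i v = colF n (int i) v" using less i False by auto
      also have "nbr n (K n (Suc i)) v - colF n (int i) v = colF n (int j) v"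
        using r KS i by (simp add: algebra_simps)
      finally show ?thesis .
    qed
  qed
qed

lemma K_last: assumes n: "n \<ge> 5" and v: "v < n" shows "K n (n - 1) v = 0"
proof -
  have "K n (n-1) v = colF n (int (n - 1)) v" using K_eq[OF n _ _ v] n by simp
  also have "\<dots> = 0"
  proof (cases "v \<le> 1")
    case True then show ?thesis using n unfolding colF_def zz_def by auto
  next
    case False
    define M where "M = int n - 1"
    define t where "t = int v - 1"
    have t: "\<bar>t\<bar> < M" using False v unfolding t_def M_def by auto
    have "colF n (int (n - 1)) v = zz M (M + t) + zz M (t - M)"
      using False n unfolding colF_def M_def t_def by (simp add: of_nat_diff algebra_simps)
    also have "zz M (t - M) = zz M (M - t)" by (rule zz_even)
    also have "zz M (M + t) = - zz M (M - t)" by (rule zz_refl[OF t])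
    finally show ?thesis by simp
  qed
  finally show ?thesis .
qed



definition Tv :: "nat \<Rightarrow> nat \<Rightarrow> nat \<Rightarrow> int" where
  "Tv n j v = (if j + 1 \<le> v \<and> v + j + 1 \<le> n then 1 else 0)"

lemma colF_Fv: assumes "1 \<le> j" "j \<le> n - 2" "v < n" "n \<ge> 5"
  shows "colF n (int j) v = Fv n j v"
proof (cases "v \<le> 1")
  case True then show ?thesis using assms unfolding colF_def zz_def Fv_def by auto
next
  case False
  have a: "zz (int n - 1) (int v - 1 - int j) = (if v = j + 1 then 2 else 1)"
    using assms False unfolding zz_def by auto
  have b: "zz (int n - 1) (int v - 1 + int j) = (if v + j < n then 1 else if v + j = n then 0 else -1)"
    using assms False unfolding zz_def by auto
  show ?thesis using False unfolding colF_def a b Fv_def by auto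
qed

lemma Fv_Tv: assumes "1 \<le> j" "j + 1 \<le> n div 2" "v < n"
  shows "Fv n j v - Fv n (n - 1 - j) v = 2 * Tv n j v"
  using assms unfolding Fv_def Tv_def by auto



definition inS :: "nat \<Rightarrow> int mat \<Rightarrow> (nat \<Rightarrow> int) \<Rightarrow> bool" where
  "inS n P f \<longleftrightarrow> (\<exists>y. \<forall>v<n. f v = (\<Sum>c<n. P $$ (v,c) * y c))"

lemma inS_add: "inS n P f \<Longrightarrow> inS n P g \<Longrightarrow> inS n P (\<lambda>v. f v + g v)"
  unfolding inS_def
proof (elim exE)
  fix y z assume y: "\<forall>v<n. f v = (\<Sum>c<n. P $$ (v,c) * y c)" and z: "\<forall>v<n. g v = (\<Sum>c<n. P $$ (v,c) * z c)"
  show "\<exists>w. \<forall>v<n. f v + g v = (\<Sum>c<n. P $$ (v,c) * w c)"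
    by (rule exI[of _ "\<lambda>c. y c + z c"]) (simp add: y z distrib_left sum.distrib)
qed

lemma inS_smult: "inS n P f \<Longrightarrow> inS n P (\<lambda>v. k * f v)"
  unfolding inS_def
proof (elim exE)
  fix y assume y: "\<forall>v<n. f v = (\<Sum>c<n. P $$ (v,c) * y c)"
  show "\<exists>w. \<forall>v<n. k * f v = (\<Sum>c<n. P $$ (v,c) * w c)"
    by (rule exI[of _ "\<lambda>c. k * y c"]) (simp add: y sum_distrib_left algebra_simps)
qed

lemma inS_cong: "inS n P f \<Longrightarrow> (\<And>v. v < n \<Longrightarrow> g v = f v) \<Longrightarrow> inS n P g"
  unfolding inS_def by auto

lemma inS_diff: "inS n P f \<Longrightarrow> inS n P g \<Longrightarrow> inS n P (\<lambda>v. f v - g v)"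
  using inS_add[of n P f "\<lambda>v. (-1) * g v"] inS_smult[of n P g "-1"] by simp

lemma inS_zero: "inS n P (\<lambda>v. 0)"
  unfolding inS_def by (rule exI[of _ "\<lambda>_. 0"]) simp

lemma inS_col: assumes "c < n" shows "inS n P (\<lambda>v. P $$ (v,c))"
  unfolding inS_def
proof (rule exI[of _ "\<lambda>i. if i = c then 1 else 0"], intro allI impI)
  fix v
  have "(\<Sum>i<n. P $$ (v,i) * (if i = c then 1 else 0)) = (\<Sum>i<n. if i = c then P $$ (v,i) else 0)"
    by (intro sum.cong) auto
  also have "\<dots> = P $$ (v,c)" using assms by simp
  finally show "P $$ (v,c) = (\<Sum>i<n. P $$ (v,i) * (if i = c then 1 else 0))" by simp
qed

definition uu :: "nat \<Rightarrow> nat \<Rightarrow> int" where "uu p v = (if v = p then 1 else 0)"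
definition ss :: "nat \<Rightarrow> nat \<Rightarrow> int" where "ss j v = (if 2 \<le> v \<and> v \<le> j then 1 else 0)"
definition BB :: "nat \<Rightarrow> nat \<Rightarrow> nat \<Rightarrow> int" where "BB n j v = (if 2 \<le> v \<and> v + j + 1 \<le> n then 1 else 0)"
definition gg :: "nat \<Rightarrow> int" where "gg j = (if j mod 4 = 0 \<or> j mod 4 = 3 then 1 else 0)"

lemma gg_step: "gg (i + 2) = 1 - gg i"
  unfolding gg_def by (auto simp: mod_add_left_eq[symmetric]; presburger)

lemma pw1: "v < n \<Longrightarrow> 1 = uu 0 v + uu 1 v + BB n 0 v" unfolding uu_def BB_def by auto
lemma pw2: "n \<ge> 3 \<Longrightarrow> v < n \<Longrightarrow> BB n 0 v = BB n 1 v + uu (n-1) v" unfolding uu_def BB_def by auto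
lemma pw3: "1 \<le> j \<Longrightarrow> Fv n j v = uu 0 v + uu 1 v + uu (j+1) v + BB n j v + BB n (j-1) v"
  unfolding uu_def BB_def Fv_def by auto
lemma pw4: "1 \<le> j \<Longrightarrow> ss (j+1) v = ss j v + uu (j+1) v" unfolding uu_def ss_def by auto
lemma pw5: "2 * j + 1 \<le> n \<Longrightarrow> 1 \<le> j \<Longrightarrow> Tv n j v = BB n j v - ss j v" unfolding Tv_def BB_def ss_def by auto
lemma pw6: "ss 1 v = 0" "ss 0 v = 0" unfolding ss_def by auto
lemma pw7: "v < n \<Longrightarrow> ss k v = BB n (n - 1 - k) v" unfolding ss_def BB_def by auto

lemma span_all:
  assumes n: "n \<ge> 5" and n4: "\<not> 4 dvd n"
  and e: "inS n P (\<lambda>_. 1)" and u0: "inS n P (uu 0)"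
  and F: "\<And>j. 1 \<le> j \<Longrightarrow> j \<le> (n+1) div 2 - 1 \<Longrightarrow> inS n P (Fv n j)"
  and T: "\<And>j. 1 \<le> j \<Longrightarrow> j + 1 \<le> n div 2 \<Longrightarrow> inS n P (Tv n j)"
  and p: "p < n"
  shows "inS n P (uu p)"
proof -
  define f where "f = n div 2 - 1"
  define X where "X = uu (n - 1)"
  have f1: "f \<ge> 1" using n unfolding f_def by auto
  have fa: "f \<le> (n+1) div 2 - 1" unfolding f_def by auto
  have D1: "inS n P (\<lambda>v. BB n j v - ss j v)" if "1 \<le> j" "j \<le> f" for j
  proof -
    have "inS n P (Tv n j)" using T[of j] that unfolding f_def by auto
    then show ?thesis by (rule inS_cong) (use pw5[of j n] that n in \<open>auto simp: f_def\<close>)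
  qed
  have C: "inS n P (\<lambda>v. ss j v - gg j * X v)" if "1 \<le> j" "j \<le> f + 1" for j
    using that
  proof (induct j rule: less_induct)
    case (less j)
    show ?case
    proof (cases "j \<le> 2")
      case True
      then consider "j = 1" | "j = 2" using less by linarith
      then show ?thesis
      proof cases
        case 1 show ?thesis by (rule inS_cong[OF inS_zero]) (simp add: ss_def gg_def 1)
      next
        case 2
        have "inS n P (\<lambda>v. (Fv n 1 v - 1) - (BB n 1 v - ss 1 v))"
          by (intro inS_diff F e D1) (use f1 fa in auto)
        then show ?thesis
        proof (rule inS_cong)
          fix v assume v: "v < n"
          have f3: "Fv n 1 v = uu 0 v + uu 1 v + uu 2 v + BB n 1 v + BB n 0 v" by (simp add: Fv_def uu_def BB_def)
          have f4: "ss 2 v = uu 2 v" by (simp add: ss_def uu_def)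
          have f6: "ss 1 v = 0" by (simp add: ss_def)
          have g2: "gg 2 = 0" by (simp add: gg_def)
          show "ss j v - gg j * X v = (Fv n 1 v - 1) - (BB n 1 v - ss 1 v)"
            unfolding 2 g2 mult_zero_left using f3 f4 f6 pw1[OF v] pw2[OF _ v] n by linarith
        qed
      qed
    next
      case False
      define i where "i = j - 2"
      have i: "j = i + 2" "1 \<le> i" using False unfolding i_def by auto
      have IH: "inS n P (\<lambda>v. ss i v - gg i * X v)" using less i by auto
      have "inS n P (\<lambda>v. (Fv n (i+1) v - 1) - (BB n (i+1) v - ss (i+1) v) - (BB n i v - ss i v)
          + (BB n 1 v - ss 1 v) - (ss i v - gg i * X v))"
        by (intro inS_diff inS_add F e D1 IH) (use less i fa in auto)
      then show ?thesis
      proof (rule inS_cong)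
        fix v assume v: "v < n"
        have a: "gg (i+2) * X v = X v - gg i * X v" unfolding gg_step by (simp add: left_diff_distrib)
        have f3: "Fv n (i+1) v = uu 0 v + uu 1 v + uu (i+2) v + BB n (i+1) v + BB n i v"
          using i by (auto simp: Fv_def uu_def BB_def)
        have f4: "ss (i+2) v = ss (i+1) v + uu (i+2) v" by (auto simp: ss_def uu_def)
        have f6: "ss 1 v = 0" by (simp add: ss_def)
        show "ss j v - gg j * X v = (Fv n (i+1) v - 1) - (BB n (i+1) v - ss (i+1) v) - (BB n i v - ss i v)
          + (BB n 1 v - ss 1 v) - (ss i v - gg i * X v)"
          unfolding i(1) using a f3 f4 f6 pw1[OF v] pw2[OF _ v] n unfolding X_def by linarith
      qed
    qed
  qed
  have sq: "inS n P X" if c: "c * c = 1" and h: "inS n P (\<lambda>v. c * X v)" for c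
  proof -
    have "inS n P (\<lambda>v. c * (c * X v))" using h by (rule inS_smult)
    then show ?thesis by (rule inS_cong) (simp add: mult.assoc[symmetric] c)
  qed
  have Xin: "inS n P X"
  proof (cases "even n")
    case True
    have nf: "n = 2 * f + 2" using True n unfolding f_def by auto
    have fe: "f mod 4 = 0 \<or> f mod 4 = 2" using n4 nf by presburger
    have cc: "(gg (f+1) - gg f) * (gg (f+1) - gg f) = 1"
    proof -
      from fe have "(f + 1) mod 4 = 1 \<and> f mod 4 = 0 \<or> (f + 1) mod 4 = 3 \<and> f mod 4 = 2" by presburger
      then show ?thesis unfolding gg_def by auto
    qed
    have "inS n P (\<lambda>v. (BB n f v - ss f v) - (ss (f+1) v - gg (f+1) * X v) + (ss f v - gg f * X v))"
      by (intro inS_add inS_diff D1 C) (use f1 in auto)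
    then have "inS n P (\<lambda>v. (gg (f+1) - gg f) * X v)"
    proof (rule inS_cong)
      fix v assume v: "v < n"
      have "ss (f+1) v = BB n f v" using pw7[OF v, of "f+1"] nf by simp
      then show "(gg (f+1) - gg f) * X v = (BB n f v - ss f v) - (ss (f+1) v - gg (f+1) * X v) + (ss f v - gg f * X v)"
        by (simp add: algebra_simps)
    qed
    then show ?thesis using sq cc by blast
  next
    case False
    have nf: "n = 2 * f + 3" using False n unfolding f_def by presburger
    have cc: "(1 - 2 * gg f) * (1 - 2 * gg f) = 1" unfolding gg_def by auto
    have "inS n P (\<lambda>v. 2 * (BB n f v - ss f v) - (BB n 1 v - ss 1 v) + 2 * (ss f v - gg f * X v) - (Fv n (f+1) v - 1))"
      by (intro inS_add inS_diff inS_smult D1 C F e) (use f1 nf in auto)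
    then have "inS n P (\<lambda>v. (1 - 2 * gg f) * X v)"
    proof (rule inS_cong)
      fix v assume v: "v < n"
      have a: "uu (f+2) v + BB n (f+1) v = BB n f v" using nf unfolding uu_def BB_def by auto
      show "(1 - 2 * gg f) * X v = 2 * (BB n f v - ss f v) - (BB n 1 v - ss 1 v) + 2 * (ss f v - gg f * X v) - (Fv n (f+1) v - 1)"
        using pw1[OF v] pw2[OF _ v] pw3[of "f+1" n v] pw6 a n unfolding X_def
        by (simp add: algebra_simps)
    qed
    then show ?thesis using sq cc by blast
  qed
  have ss_in: "inS n P (ss k)" if "k \<le> f + 1" for k
  proof (cases "k = 0")
    case True then show ?thesis by (intro inS_cong[OF inS_zero]) (simp add: ss_def)
  next
    case False
    have "inS n P (\<lambda>v. (ss k v - gg k * X v) + gg k * X v)"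
      by (intro inS_add inS_smult C Xin) (use False that in auto)
    then show ?thesis by (rule inS_cong) simp
  qed
  have BB_in1: "inS n P (BB n j)" if "1 \<le> j" "j \<le> n - 1" for j
  proof (cases "j \<le> f")
    case True
    have "inS n P (\<lambda>v. (BB n j v - ss j v) + ss j v)"
      by (intro inS_add D1 ss_in) (use True that in auto)
    then show ?thesis by (rule inS_cong) simp
  next
    case False
    have "inS n P (ss (n - 1 - j))" by (rule ss_in) (use False that in \<open>auto simp: f_def\<close>)
    then show ?thesis by (rule inS_cong) (use pw7[of _ n "n - 1 - j"] that in auto)
  qed
  have BB_in: "inS n P (BB n j)" if "j \<le> n - 1" for j
  proof (cases "j = 0")
    case True
    have "inS n P (\<lambda>v. BB n 1 v + X v)" by (intro inS_add BB_in1 Xin) (use n in auto)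
    then show ?thesis by (rule inS_cong) (use pw2 n True in \<open>auto simp: X_def\<close>)
  qed (use BB_in1 that in auto)
  have ss_all: "inS n P (ss k)" for k
  proof -
    have "inS n P (BB n (n - 1 - k))" by (rule BB_in) simp
    then show ?thesis by (rule inS_cong) (rule pw7)
  qed
  show ?thesis
  proof (cases "p \<le> 1")
    case True
    then consider "p = 0" | "p = 1" by linarith
    then show ?thesis
    proof cases
      case 1 then show ?thesis using u0 by simp
    next
      case 2
      have "inS n P (\<lambda>v. 1 - uu 0 v - BB n 0 v)" by (intro inS_diff e u0 BB_in) auto
      then show ?thesis
      proof (rule inS_cong)
        fix v assume v: "v < n"
        show "uu p v = 1 - uu 0 v - BB n 0 v" using pw1[OF v] 2 by simp
      qed
    qed
  next
    case False
    have "inS n P (\<lambda>v. ss p v - ss (p - 1) v)" by (intro inS_diff ss_all)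
    then show ?thesis by (rule inS_cong) (use pw4[of "p - 1"] False in auto)
  qed
qed


lemma mat_mult_sum: assumes "A \<in> carrier_mat m n" "B \<in> carrier_mat n k" "i < m" "j < k"
  shows "(A * B) $$ (i,j) = (\<Sum>l<n. A $$ (i,l) * B $$ (l,j))"
  using assms by (simp add: scalar_prod_def lessThan_atLeast0)

lemma unimod_from_rinv:
  assumes P: "(P :: int mat) \<in> carrier_mat n n" and X: "X \<in> carrier_mat n n" and PX: "P * X = 1\<^sub>m n"
  shows "\<exists>U. unimodular_int n U \<and> U * P = 1\<^sub>m n"
proof -
  have d: "det P * det X = 1" using det_mult[OF P X] PX by simp
  define U where "U = det X \<cdot>\<^sub>m adj_mat P"
  have Uc: "U \<in> carrier_mat n n" unfolding U_def using adj_mat(1)[OF P] by simp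
  have "U * P = det X \<cdot>\<^sub>m (adj_mat P * P)"
    unfolding U_def by (rule mult_smult_assoc_mat[OF adj_mat(1)[OF P] P])
  also have "\<dots> = det X \<cdot>\<^sub>m (det P \<cdot>\<^sub>m 1\<^sub>m n)" using adj_mat(3)[OF P] by simp
  also have "\<dots> = 1\<^sub>m n" using d by (intro eq_matI) (auto simp: algebra_simps)
  finally have UP: "U * P = 1\<^sub>m n" .
  have "det U * det P = 1" using det_mult[OF Uc P] UP by simp
  then have "det U dvd 1" by (metis dvdI mult.commute)
  then show ?thesis using UP Uc unfolding unimodular_int_def by blast
qed

definition Vmat :: "nat \<Rightarrow> int mat" where
  "Vmat n = mat n n (\<lambda>(i,c). if (n+1) div 2 \<le> c \<and> c < n - 1 then cheb c i - cheb (n-1-c) i else cheb c i)"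

definition Pmat :: "nat \<Rightarrow> int mat" where
  "Pmat n = mat n n (\<lambda>(v,c). if c = 0 then 1 else if c < (n+1) div 2 then Fv n c v
      else if c < n - 1 then - Tv n (n-1-c) v else uu 0 v)"

lemma det_Vmat: "det (Vmat n) = 1"
proof -
  have ut: "upper_triangular (Vmat n)"
    unfolding upper_triangular_def Vmat_def by (auto simp: cheb_zero)
  have "det (Vmat n) = prod_list (diag_mat (Vmat n))"
    by (rule det_upper_triangular[OF ut, of n]) (simp add: Vmat_def)
  also have "\<dots> = (\<Prod>i = 0..<n. Vmat n $$ (i,i))" by (simp add: prod_list_diag_prod Vmat_def)
  also have "\<dots> = (\<Prod>i = 0..<n. 1)"
    by (intro prod.cong) (auto simp: Vmat_def cheb_diag cheb_zero)
  finally show ?thesis by simp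
qed

lemma P_unimod: assumes n: "n \<ge> 5" "\<not> 4 dvd n"
  shows "\<exists>U. unimodular_int n U \<and> U * Pmat n = 1\<^sub>m n"
proof -
  let ?P = "Pmat n"
  have Pc: "?P \<in> carrier_mat n n" by (simp add: Pmat_def)
  have col: "inS n ?P g" if "c < n" "\<And>v. v < n \<Longrightarrow> g v = ?P $$ (v,c)" for c g
    using inS_col[OF that(1), of ?P] by (rule inS_cong) (use that in auto)
  have all: "inS n ?P (uu p)" if "p < n" for p
  proof (rule span_all[OF n _ _ _ _ that])
    show "inS n ?P (\<lambda>_. 1)" by (rule col[of 0]) (use n in \<open>auto simp: Pmat_def\<close>)
    show "inS n ?P (uu 0)" by (rule col[of "n - 1"]) (use n in \<open>auto simp: Pmat_def\<close>)
    show "inS n ?P (Fv n j)" if "1 \<le> j" "j \<le> (n + 1) div 2 - 1" for j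
      by (rule col[of j]) (use n that in \<open>auto simp: Pmat_def\<close>)
    show "inS n ?P (Tv n j)" if "1 \<le> j" "j + 1 \<le> n div 2" for j
    proof -
      have "inS n ?P (\<lambda>v. - Tv n j v)"
        by (rule col[of "n - 1 - j"]) (use n that in \<open>auto simp: Pmat_def\<close>)
      from inS_smult[OF this, of "-1"] show ?thesis by simp
    qed
  qed
  have "\<forall>i. \<exists>y. i < n \<longrightarrow> (\<forall>v<n. uu i v = (\<Sum>c<n. ?P $$ (v,c) * y c))"
    using all unfolding inS_def by blast
  then obtain Y where Y: "\<And>i v. i < n \<Longrightarrow> v < n \<Longrightarrow> uu i v = (\<Sum>c<n. ?P $$ (v,c) * Y i c)"
    by metis
  define X where "X = mat n n (\<lambda>(c,i). Y i c)"
  have Xc: "X \<in> carrier_mat n n" by (simp add: X_def)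
  have "?P * X = 1\<^sub>m n"
  proof (rule eq_matI)
    fix v i assume "v < dim_row (1\<^sub>m n)" "i < dim_col (1\<^sub>m n)"
    then have vi: "v < n" "i < n" by auto
    have "(?P * X) $$ (v,i) = (\<Sum>c<n. ?P $$ (v,c) * X $$ (c,i))" by (rule mat_mult_sum[OF Pc Xc vi])
    also have "\<dots> = (\<Sum>c<n. ?P $$ (v,c) * Y i c)" using vi by (intro sum.cong) (auto simp: X_def)
    also have "\<dots> = uu i v" using Y[OF vi(2) vi(1)] by simp
    finally show "(?P * X) $$ (v,i) = 1\<^sub>m n $$ (v,i)" using vi by (simp add: uu_def)
  qed (auto simp: Pmat_def X_def)
  then show ?thesis by (rule unimod_from_rinv[OF Pc Xc])
qed




lemma WV_eq: assumes n: "n \<ge> 5"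
  shows "walk_matrix n (Dn_adj n) * Vmat n = Pmat n * (mat n n (\<lambda>(i, j). if i = j then
               (if i < (n + 1) div 2 then 1 else if i < n - 1 then 2 else 0) else 0))"
    (is "?W * ?V = ?P * ?D")
proof (rule eq_matI)
  have Wc: "?W \<in> carrier_mat n n" by (simp add: walk_matrix_def)
  have Vc: "?V \<in> carrier_mat n n" by (simp add: Vmat_def)
  have Pc: "?P \<in> carrier_mat n n" by (simp add: Pmat_def)
  have Dc: "?D \<in> carrier_mat n n" by simp
  fix v c assume "v < dim_row (?P * ?D)" "c < dim_col (?P * ?D)"
  then have vc: "v < n" "c < n" using Pc Dc by auto
  define dd where "dd = (if c < (n + 1) div 2 then 1 else if c < n - 1 then 2 else 0 :: int)"
  have R: "(?P * ?D) $$ (v,c) = ?P $$ (v,c) * dd"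
  proof -
    have "(?P * ?D) $$ (v,c) = (\<Sum>l<n. ?P $$ (v,l) * ?D $$ (l,c))" by (rule mat_mult_sum[OF Pc Dc vc])
    also have "\<dots> = (\<Sum>l<n. if l = c then ?P $$ (v,c) * dd else 0)"
      using vc by (intro sum.cong) (auto simp: dd_def)
    also have "\<dots> = ?P $$ (v,c) * dd" using vc by simp
    finally show ?thesis .
  qed
  have L: "(?W * ?V) $$ (v,c) = (\<Sum>i<n. wk n i v * ?V $$ (i,c))"
    using mat_mult_sum[OF Wc Vc vc] vc by (simp add: walk_matrix_def wk_def)
  have Kc: "K n j v = colF n (int j) v" if "1 \<le> j" "j \<le> n - 1" for j using K_eq[OF n that vc(1)] .
  show "(?W * ?V) $$ (v,c) = (?P * ?D) $$ (v,c)"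
  proof (cases "(n+1) div 2 \<le> c \<and> c < n - 1")
    case True
    define j where "j = n - 1 - c"
    have j: "1 \<le> j" "j + 1 \<le> n div 2" "n - 1 - j = c" using True unfolding j_def by auto
    have "(?W * ?V) $$ (v,c) = (\<Sum>i<n. cheb c i * wk n i v - cheb j i * wk n i v)"
      unfolding L using True vc by (intro sum.cong) (auto simp: Vmat_def j_def algebra_simps)
    also have "\<dots> = K n c v - K n j v" unfolding K_def by (simp add: sum_subtractf)
    also have "\<dots> = Fv n c v - Fv n j v"
      using Kc[of c] Kc[of j] colF_Fv[of c n v] colF_Fv[of j n v] True j n vc by auto
    also have "\<dots> = - (2 * Tv n j v)" using Fv_Tv[OF j(1) j(2) vc(1)] j(3) by simp
    also have "\<dots> = (?P * ?D) $$ (v,c)"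
    proof -
      have c0: "c \<noteq> 0" "\<not> c < (n+1) div 2" "c < n - 1" using True n by auto
      have p: "?P $$ (v,c) = - Tv n j v" using c0 vc unfolding j_def by (simp add: Pmat_def)
      have d: "dd = 2" using True unfolding dd_def by auto
      show ?thesis unfolding R p d by simp
    qed
    finally show ?thesis .
  next
    case False
    have "(?W * ?V) $$ (v,c) = K n c v"
      unfolding L K_def using False vc by (intro sum.cong) (auto simp: Vmat_def)
    also have "\<dots> = (?P * ?D) $$ (v,c)"
    proof -
      consider "c = 0" | "1 \<le> c" "c < (n+1) div 2" | "c = n - 1" using False vc by linarith
      then show ?thesis
      proof cases
        case 1 then show ?thesis unfolding R using K_0[OF vc(1)] vc by (simp add: Pmat_def dd_def)
      next
        case 2
        have "K n c v = Fv n c v" using Kc[of c] colF_Fv[of c n v] 2 n vc by auto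
        then show ?thesis unfolding R using 2 vc by (simp add: Pmat_def dd_def)
      next
        case 3 then show ?thesis unfolding R using K_last[OF n vc(1)] vc n by (simp add: Pmat_def dd_def)
      qed
    qed
    finally show ?thesis .
  qed
qed (auto simp: walk_matrix_def Vmat_def Pmat_def)

theorem theorem1p3:
  fixes n :: nat
  assumes "n \<ge> 4" and "\<not> (4 dvd n)"
  shows "is_smith_normal_form n (walk_matrix n (Dn_adj n))
           (mat n n (\<lambda>(i, j). if i = j then
               (if i < (n + 1) div 2 then 1 else if i < n - 1 then 2 else 0) else 0))"
proof -
  define D :: "int mat" where "D = mat n n (\<lambda>(i, j). if i = j then
               (if i < (n + 1) div 2 then 1 else if i < n - 1 then 2 else 0) else 0)"
  have n: "n \<ge> 5" using assms by (cases "n = 4") auto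
  obtain U where U: "unimodular_int n U" "U * Pmat n = 1\<^sub>m n" using P_unimod[OF n assms(2)] by blast
  have Uc: "U \<in> carrier_mat n n" using U unfolding unimodular_int_def by simp
  have Wc: "walk_matrix n (Dn_adj n) \<in> carrier_mat n n" by (simp add: walk_matrix_def)
  have Vc: "Vmat n \<in> carrier_mat n n" by (simp add: Vmat_def)
  have Pc: "Pmat n \<in> carrier_mat n n" by (simp add: Pmat_def)
  have Dc: "D \<in> carrier_mat n n" by (simp add: D_def)
  have V: "unimodular_int n (Vmat n)" unfolding unimodular_int_def using Vc det_Vmat by simp
  have "U * walk_matrix n (Dn_adj n) * Vmat n = U * (walk_matrix n (Dn_adj n) * Vmat n)"
    by (rule assoc_mult_mat[OF Uc Wc Vc])
  also have "\<dots> = U * (Pmat n * D)" using WV_eq[OF n] unfolding D_def by simp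
  also have "\<dots> = (U * Pmat n) * D" by (rule assoc_mult_mat[symmetric, OF Uc Pc Dc])
  also have "\<dots> = D" using U(2) Dc by simp
  finally have eq: "U * walk_matrix n (Dn_adj n) * Vmat n = D" .
  have dv: "D $$ (i,i) dvd D $$ (i+1,i+1)" if "i + 1 < n" for i
    using that unfolding D_def by auto
  show ?thesis unfolding is_smith_normal_form_def D_def[symmetric]
    using Dc dv eq U(1) V by (auto simp: D_def)
qed

end
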